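(* Let $\mathfrak{I}=(\mathcal{I},[\mathcal{F}_1,\dots,\mathcal{F}_k],\mathcal{X},\pi,\sim,\mathcal{S})$ be a domain constrained interpretation and let $C,D,E$ be concepts. If $\mu(C,D)\neq\emptyset$ and $\mu(D,E)\neq\emptyset$, then $$\mu(C,E)=\{\sigma_{U\oplus V}\mid \sigma_U\in\mu(C,D),\ \sigma_V\in\mu(D,E)\},$$ where $U\oplus V=\{(i,k)\mid (i,j)\in U,(j,k)\in V, i\neq k\}\cup\{(i,j)\mid (i,j)\in U, j\notin \mathrm{src}(V)\}\cup\{(j,k)\mid (j,k)\in V, j\notin\mathrm{tgt}(U)\}$.
   Context: Concepts are built by the grammar $C,D::=\top\mid\bot\mid A\mid C\sqcap D\mid \exists r.C\mid N$ and natural concepts $N,N'::=A'\mid N\sqcap N'\mid N\bowtie N'\mid \exists r'.N$, where $A$ is a concept name, $A'$ a natural concept name (a distinguished infinite subset of concept names), $r$ a role name and $r'$ an intra-domain role name (a distinguished infinite subset of role names). A domain constrained interpretation is a tuple $\mathfrak{I}=(\mathcal{I},[\mathcal{F}_1,\dots,\mathcal{F}_k],\mathcal{X},\pi,\sim,\mathcal{S})$ where $\mathcal{I}=(\Delta^{\mathcal{I}},\cdot^{\mathcal{I}})$ is a classical DL interpretation, $[\mathcal{F}_1,\dots,\mathcal{F}_k]$ is a partition of a nonempty finite set $\mathcal{F}$ (of features), $\mathcal{X}\subseteq 2^{\mathcal{F}}$ with $\mathcal{F}\in\mathcal{X}$, $\pi:\Delta^{\mathcal{I}}\to 2^{\mathcal{F}}$,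 $\sim$ is an equivalence relation on $\{1,\dots,k\}$, and $\mathcal{S}=\{\sigma_{(s,t)}\mid (s,t)\in\sim\}$ with each $\sigma_{(s,t)}$ a bijection $\mathcal{F}_s\to\mathcal{F}_t$. Let $\mathcal{C}$ be the set of $G\subseteq\mathcal{F}$ with $X\not\subseteq G$ for all $X\in\mathcal{X}$, and $\mathcal{C}^i=\{G\in\mathcal{C}\mid G\subseteq\mathcal{F}_i\}$. It is required that: (1) $X\not\subseteq\pi(d)$ for all $d\in\Delta^{\mathcal{I}}$, $X\in\mathcal{X}$; (2) every $G\in\mathcal{C}$ equals $\pi(d)$ for some $d$; (3) $\sigma_{(s,t)}^{-1}=\sigma_{(t,s)}$ and $\sigma_{(t,u)}\circ\sigma_{(s,t)}=\sigma_{(s,u)}$ for $(s,t),(t,u)\in\sim$; (4) for $G\in\mathcal{C}^i$ and $(i,j)\in\sim$, $\{\sigma_{(i,j)}(f)\mid f\in G\}\in\mathcal{C}$; (5) for $(i,j)\in\sim$ with $i\neq j$, $f\in\mathcal{F}_i$, $g\in\mathcal{F}_j$, we have $\{f,g\}\in\mathcal{X}$. For a concept $C$, $\varphi(C)=\bigcap\{\pi(d)\mid d\in C^{\mathcal{I}}\}$ ($=\mathcal{F}$ if $C^{\mathcal{I}}=\emptyset$). Concepts are interpreted as usual for $\top,\bot$, names, $\sqcap$, $\exists$, and $(N\bowtie N')^{\mathcal{I}}=\{d\mid\varphi(N)\cap\varphi(N')\subseteq\pi(d)\}$; every intra-domain role name $r$ must be interpreted as an intra-domain relation, i.e. there is $\kappa_r:2^{\mathcal{F}}\to2^{\mathcal{F}}$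 with $(\exists r.C)^{\mathcal{I}}=\{d\mid \kappa_r(\varphi(C))\subseteq\pi(d)\}$ for every concept $C$, such that: $\kappa_r(G)=\bigcup_{i=1}^k\kappa_r(G\cap\mathcal{F}_i)$ for $G\in\mathcal{C}$; $\kappa_r(G)\subseteq\mathcal{F}_i$ for $G\in\mathcal{C}^i$; $\kappa_r(\sigma_{(i,j)}(G))=\sigma_{(i,j)}(\kappa_r(G))$ for $(i,j)\in\sim$, $G\in\mathcal{C}^i$; $\kappa_r(G)\neq\emptyset$ for $G\in\mathcal{C}^i\setminus\{\emptyset\}$. Let $\delta(C)=\{i\mid \mathcal{F}_i\cap\varphi(C)\neq\emptyset\}$. For $U=\{(s_1,t_1),\dots,(s_l,t_l)\}\subseteq\sim$ with the $s_i$ pairwise distinct and the $t_i$ pairwise distinct, the domain translation $\sigma_U:\mathcal{F}\to\mathcal{F}$ is $\sigma_U(f)=\sigma_{(s_i,t_i)}(f)$ if $f\in\mathcal{F}_{s_i}$ and $\sigma_U(f)=f$ otherwise; $\mathrm{src}(U)=\{s_1,\dots,s_l\}$, $\mathrm{tgt}(U)=\{t_1,\dots,t_l\}$, and $\sigma_U(G)=\{\sigma_U(f)\mid f\in G\}$. $\mu(C,D)$ is the set of domain translations $\sigma_U$ with $\varphi(D)=\sigma_U(\varphi(C))$, $\mathrm{src}(U)\subseteq\delta(C)$, and $\mathrm{tgt}(U)\cap(\delta(C)\setminus\mathrm{src}(U))=\emptyset$. *)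

theory Defs
  imports Main
begin

text \<open>The natural conjunction coincides syntactically with the general conjunction.\<close>

datatype ('c, 'r) concept =
    Top
  | Bot
  | Name 'c
  | Conj "('c, 'r) concept" "('c, 'r) concept"
  | Exists 'r "('c, 'r) concept"
  | Bowtie "('c, 'r) concept" "('c, 'r) concept"

fun nat_concept :: "'c set \<Rightarrow> 'r set \<Rightarrow> ('c, 'r) concept \<Rightarrow> bool" where
  "nat_concept NC IR (Name A) = (A \<in> NC)"
| "nat_concept NC IR (Conj N N') = (nat_concept NC IR N \<and> nat_concept NC IR N')"
| "nat_concept NC IR (Bowtie N N') = (nat_concept NC IR N \<and> nat_concept NC IR N')"
| "nat_concept NC IR (Exists r N) = (r \<in> IR \<and> nat_concept NC IR N)"
| "nat_concept NC IR Top = False"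
| "nat_concept NC IR Bot = False"

fun wf_concept :: "'c set \<Rightarrow> 'r set \<Rightarrow> ('c, 'r) concept \<Rightarrow> bool" where
  "wf_concept NC IR Top = True"
| "wf_concept NC IR Bot = True"
| "wf_concept NC IR (Name A) = True"
| "wf_concept NC IR (Conj C D) = (wf_concept NC IR C \<and> wf_concept NC IR D)"
| "wf_concept NC IR (Exists r C) = wf_concept NC IR C"
| "wf_concept NC IR (Bowtie N N') = nat_concept NC IR (Bowtie N N')"

record ('d, 'c, 'r, 'f) dci =
  NC    :: "'c set"
  IR    :: "'r set"
  Delta :: "'d set"
  cI    :: "'c \<Rightarrow> 'd set"
  rI    :: "'r \<Rightarrow> ('d \<times> 'd) set"
  k     :: nat
  Fs    :: "nat \<Rightarrow> 'f set"
  X     :: "'f set set"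
  pi    :: "'d \<Rightarrow> 'f set"
  sim   :: "(nat \<times> nat) set"
  sigma :: "nat \<Rightarrow> nat \<Rightarrow> 'f \<Rightarrow> 'f"

definition feats :: "('d, 'c, 'r, 'f, 'z) dci_scheme \<Rightarrow> 'f set" where
  "feats I = (\<Union>i\<in>{1..k I}. Fs I i)"

definition Cset :: "('d, 'c, 'r, 'f, 'z) dci_scheme \<Rightarrow> 'f set set" where
  "Cset I = {G. G \<subseteq> feats I \<and> (\<forall>x\<in>X I. \<not> x \<subseteq> G)}"

definition Cset_i :: "('d, 'c, 'r, 'f, 'z) dci_scheme \<Rightarrow> nat \<Rightarrow> 'f set set" where
  "Cset_i I i = {G \<in> Cset I. G \<subseteq> Fs I i}"

fun ext :: "('d, 'c, 'r, 'f, 'z) dci_scheme \<Rightarrow> ('c, 'r) concept \<Rightarrow> 'd set"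
and phi :: "('d, 'c, 'r, 'f, 'z) dci_scheme \<Rightarrow> ('c, 'r) concept \<Rightarrow> 'f set" where
  "ext I Top = Delta I"
| "ext I Bot = {}"
| "ext I (Name A) = cI I A"
| "ext I (Conj C D) = ext I C \<inter> ext I D"
| "ext I (Exists r C) = {d \<in> Delta I. \<exists>e. (d, e) \<in> rI I r \<and> e \<in> ext I C}"
| "ext I (Bowtie N N') = {d \<in> Delta I. phi I N \<inter> phi I N' \<subseteq> pi I d}"
| "phi I C = feats I \<inter> (\<Inter>d\<in>ext I C. pi I d)"

definition intra_domain :: "('d, 'c, 'r, 'f, 'z) dci_scheme \<Rightarrow> 'r \<Rightarrow> bool" where
  "intra_domain I r \<longleftrightarrow> (\<exists>\<kappa> :: 'f set \<Rightarrow> 'f set.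
      (\<forall>C. wf_concept (NC I) (IR I) C \<longrightarrow>
           ext I (Exists r C) = {d \<in> Delta I. \<kappa> (phi I C) \<subseteq> pi I d})
    \<and> (\<forall>G\<in>Cset I. \<kappa> G = (\<Union>i\<in>{1..k I}. \<kappa> (G \<inter> Fs I i)))
    \<and> (\<forall>i\<in>{1..k I}. \<forall>G\<in>Cset_i I i. \<kappa> G \<subseteq> Fs I i)
    \<and> (\<forall>(i, j)\<in>sim I. \<forall>G\<in>Cset_i I i. \<kappa> (sigma I i j ` G) = sigma I i j ` \<kappa> G)
    \<and> (\<forall>i\<in>{1..k I}. \<forall>G\<in>Cset_i I i. G \<noteq> {} \<longrightarrow> \<kappa> G \<noteq> {}))"

definition is_dci :: "('d, 'c, 'r, 'f, 'z) dci_scheme \<Rightarrow> bool" where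
  "is_dci I \<longleftrightarrow>
     \<comment> \<open>distinguished infinite name sets\<close>
     infinite (NC I) \<and> infinite (IR I)
     \<comment> \<open>classical DL interpretation\<close>
   \<and> Delta I \<noteq> {}
   \<and> (\<forall>A. cI I A \<subseteq> Delta I) \<and> (\<forall>r. rI I r \<subseteq> Delta I \<times> Delta I)
     \<comment> \<open>[F_1,...,F_k] is a partition of a nonempty finite set F\<close>
   \<and> k I \<ge> 1 \<and> finite (feats I)
   \<and> (\<forall>i\<in>{1..k I}. Fs I i \<noteq> {})
   \<and> (\<forall>i\<in>{1..k I}. \<forall>j\<in>{1..k I}. i \<noteq> j \<longrightarrow> Fs I i \<inter> Fs I j = {})
     \<comment> \<open>X \<subseteq> 2^F with F \<in> X\<close>
   \<and> X I \<subseteq> Pow (feats I) \<and> feats I \<in> X I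
     \<comment> \<open>\<pi> : \<Delta> \<rightarrow> 2^F\<close>
   \<and> (\<forall>d\<in>Delta I. pi I d \<subseteq> feats I)
     \<comment> \<open>\<sim> equivalence relation on {1..k}, \<sigma>_(s,t) bijections F_s \<rightarrow> F_t\<close>
   \<and> equiv {1..k I} (sim I)
   \<and> (\<forall>(s, t)\<in>sim I. bij_betw (sigma I s t) (Fs I s) (Fs I t))
     \<comment> \<open>(1)\<close>
   \<and> (\<forall>d\<in>Delta I. \<forall>x\<in>X I. \<not> x \<subseteq> pi I d)
     \<comment> \<open>(2)\<close>
   \<and> (\<forall>G\<in>Cset I. \<exists>d\<in>Delta I. pi I d = G)
     \<comment> \<open>(3)\<close>
   \<and> (\<forall>(s, t)\<in>sim I. \<forall>g\<in>Fs I t. sigma I t s g = the_inv_into (Fs I s) (sigma I s t) g)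
   \<and> (\<forall>s t u. (s, t) \<in> sim I \<longrightarrow> (t, u) \<in> sim I \<longrightarrow>
        (\<forall>f\<in>Fs I s. sigma I t u (sigma I s t f) = sigma I s u f))
     \<comment> \<open>(4)\<close>
   \<and> (\<forall>(i, j)\<in>sim I. \<forall>G\<in>Cset_i I i. sigma I i j ` G \<in> Cset I)
     \<comment> \<open>(5)\<close>
   \<and> (\<forall>(i, j)\<in>sim I. i \<noteq> j \<longrightarrow> (\<forall>f\<in>Fs I i. \<forall>g\<in>Fs I j. {f, g} \<in> X I))
     \<comment> \<open>intra-domain role names are interpreted as intra-domain relations\<close>
   \<and> (\<forall>r\<in>IR I. intra_domain I r)"

definition delta :: "('d, 'c, 'r, 'f, 'z) dci_scheme \<Rightarrow> ('c, 'r) concept \<Rightarrow> nat set" where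
  "delta I C = {i \<in> {1..k I}. Fs I i \<inter> phi I C \<noteq> {}}"

definition src :: "(nat \<times> nat) set \<Rightarrow> nat set" where
  "src U = fst ` U"

definition tgt :: "(nat \<times> nat) set \<Rightarrow> nat set" where
  "tgt U = snd ` U"

definition trans_index :: "('d, 'c, 'r, 'f, 'z) dci_scheme \<Rightarrow> (nat \<times> nat) set \<Rightarrow> bool" where
  "trans_index I U \<longleftrightarrow> U \<subseteq> sim I \<and>
     (\<forall>(s, t)\<in>U. \<forall>(s', t')\<in>U. (s = s' \<longrightarrow> t = t') \<and> (t = t' \<longrightarrow> s = s'))"

definition dtrans :: "('d, 'c, 'r, 'f, 'z) dci_scheme \<Rightarrow> (nat \<times> nat) set \<Rightarrow> 'f \<Rightarrow> 'f" where
  "dtrans I U f =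
     (if \<exists>p\<in>U. f \<in> Fs I (fst p)
      then (let p = (SOME p. p \<in> U \<and> f \<in> Fs I (fst p)) in sigma I (fst p) (snd p) f)
      else f)"

definition mu_index :: "('d, 'c, 'r, 'f, 'z) dci_scheme \<Rightarrow> (nat \<times> nat) set
    \<Rightarrow> ('c, 'r) concept \<Rightarrow> ('c, 'r) concept \<Rightarrow> bool" where
  "mu_index I U C D \<longleftrightarrow> trans_index I U
     \<and> phi I D = dtrans I U ` phi I C
     \<and> src U \<subseteq> delta I C
     \<and> tgt U \<inter> (delta I C - src U) = {}"

definition mu :: "('d, 'c, 'r, 'f, 'z) dci_scheme \<Rightarrow> ('c, 'r) concept \<Rightarrow> ('c, 'r) concept
    \<Rightarrow> ('f \<Rightarrow> 'f) set" where
  "mu I C D = {dtrans I U | U. mu_index I U C D}"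

definition oplus :: "(nat \<times> nat) set \<Rightarrow> (nat \<times> nat) set \<Rightarrow> (nat \<times> nat) set" where
  "oplus U V =
     {(i, l) | i j l. (i, j) \<in> U \<and> (j, l) \<in> V \<and> i \<noteq> l}
   \<union> {(i, j) | i j. (i, j) \<in> U \<and> j \<notin> src V}
   \<union> {(j, l) | j l. (j, l) \<in> V \<and> j \<notin> tgt U}"

end

theory Submission
  imports Defs
begin


lemma dci_equiv: "is_dci I \<Longrightarrow> equiv {1..k I} (sim I)"
  unfolding is_dci_def by (elim conjE)
lemma dci_disj: "is_dci I \<Longrightarrow> \<forall>i\<in>{1..k I}. \<forall>j\<in>{1..k I}. i \<noteq> j \<longrightarrow> Fs I i \<inter> Fs I j = {}"
  unfolding is_dci_def by (elim conjE)
lemma dci_bij: "is_dci I \<Longrightarrow> \<forall>(s, t)\<in>sim I. bij_betw (sigma I s t) (Fs I s) (Fs I t)"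
  unfolding is_dci_def by (elim conjE)
lemma dci_comp: "is_dci I \<Longrightarrow> (\<forall>s t u. (s, t) \<in> sim I \<longrightarrow> (t, u) \<in> sim I \<longrightarrow>
        (\<forall>f\<in>Fs I s. sigma I t u (sigma I s t f) = sigma I s u f))"
  unfolding is_dci_def by (elim conjE)

lemma sim_sub: "is_dci I \<Longrightarrow> (i,j) \<in> sim I \<Longrightarrow> i \<in> {1..k I} \<and> j \<in> {1..k I}"
  using dci_equiv unfolding equiv_def refl_on_def by blast

lemma sim_refl: "is_dci I \<Longrightarrow> i \<in> {1..k I} \<Longrightarrow> (i,i) \<in> sim I"
  using dci_equiv unfolding equiv_def refl_on_def by blast

lemma sim_sym: "is_dci I \<Longrightarrow> (i,j) \<in> sim I \<Longrightarrow> (j,i) \<in> sim I"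
  using dci_equiv unfolding equiv_def sym_def by blast

lemma sim_trans: "is_dci I \<Longrightarrow> (i,j) \<in> sim I \<Longrightarrow> (j,l) \<in> sim I \<Longrightarrow> (i,l) \<in> sim I"
  using dci_equiv unfolding equiv_def trans_def by blast

lemma F_disj: "is_dci I \<Longrightarrow> i \<in> {1..k I} \<Longrightarrow> j \<in> {1..k I} \<Longrightarrow> f \<in> Fs I i \<Longrightarrow> f \<in> Fs I j \<Longrightarrow> i = j"
  using dci_disj by blast

lemma sig_map: "is_dci I \<Longrightarrow> (i,j) \<in> sim I \<Longrightarrow> f \<in> Fs I i \<Longrightarrow> sigma I i j f \<in> Fs I j"
  using dci_bij unfolding bij_betw_def by blast

lemma sig_comp: "is_dci I \<Longrightarrow> (i,j) \<in> sim I \<Longrightarrow> (j,l) \<in> sim I \<Longrightarrow> f \<in> Fs I i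
   \<Longrightarrow> sigma I j l (sigma I i j f) = sigma I i l f"
  using dci_comp by blast

lemma sig_id: assumes "is_dci I" "i \<in> {1..k I}" "f \<in> Fs I i" shows "sigma I i i f = f"
proof -
  have r: "(i,i) \<in> sim I" using sim_refl assms by blast
  have "sigma I i i (sigma I i i f) = sigma I i i f" using sig_comp[OF assms(1) r r assms(3)] .
  moreover have "inj_on (sigma I i i) (Fs I i)" using dci_bij[OF assms(1)] r unfolding bij_betw_def by blast
  moreover have "sigma I i i f \<in> Fs I i" using sig_map[OF assms(1) r assms(3)] .
  ultimately show ?thesis using assms(3) by (meson inj_onD)
qed

lemma phi_feats: "phi I C \<subseteq> feats I" by simp

lemma feats_E: "f \<in> feats I \<Longrightarrow> (\<And>i. i \<in> {1..k I} \<Longrightarrow> f \<in> Fs I i \<Longrightarrow> P) \<Longrightarrow> P"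
  unfolding feats_def by blast

lemma dt_out: "(\<forall>p\<in>U. f \<notin> Fs I (fst p)) \<Longrightarrow> dtrans I U f = f"
  unfolding dtrans_def by auto

lemma dt_in: assumes "is_dci I" "trans_index I U" "(i,j) \<in> U" "f \<in> Fs I i"
  shows "dtrans I U f = sigma I i j f"
proof -
  have ex: "\<exists>p\<in>U. f \<in> Fs I (fst p)" using assms by force
  define p where "p = (SOME p. p \<in> U \<and> f \<in> Fs I (fst p))"
  have p: "p \<in> U \<and> f \<in> Fs I (fst p)" unfolding p_def by (rule someI_ex) (use ex in blast)
  have U: "U \<subseteq> sim I" using assms(2) unfolding trans_index_def by blast
  have "fst p = i" using F_disj[OF assms(1) _ _ _ assms(4)] sim_sub[OF assms(1)] p U assms(3)
    by (metis prod.collapse subsetD)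
  then have "p = (i,j)" using assms(2,3) p unfolding trans_index_def by (metis (mono_tags, lifting) case_prodD prod.collapse)
  then show ?thesis unfolding dtrans_def using ex p_def by (simp add: Let_def)
qed

lemma dt_notsrc: assumes "is_dci I" "trans_index I U" "i \<in> {1..k I}" "f \<in> Fs I i" "\<forall>j. (i,j) \<notin> U"
  shows "dtrans I U f = f"
proof (rule dt_out, rule ballI)
  fix p assume "p \<in> U"
  then obtain a b where ab: "p = (a,b)" "(a,b) \<in> U" by (cases p) auto
  have "a \<in> {1..k I}" using ab assms(2) sim_sub[OF assms(1)] unfolding trans_index_def by blast
  then show "f \<notin> Fs I (fst p)" using ab assms F_disj by fastforce
qed

lemma dt_gen: assumes "is_dci I" "trans_index I U" "i \<in> {1..k I}" "f \<in> Fs I i"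
  "\<forall>l. (i,l) \<in> U \<longrightarrow> l = j" "j \<noteq> i \<longrightarrow> (i,j) \<in> U"
  shows "dtrans I U f = sigma I i j f"
proof (cases "(i,j) \<in> U")
  case True then show ?thesis using dt_in assms by metis
next
  case False
  then have "j = i" "\<forall>j. (i,j) \<notin> U" using assms by auto
  then show ?thesis using dt_notsrc[OF assms(1-4)] sig_id[OF assms(1,3,4)] by simp
qed

lemma trans_index_sub: "trans_index I U \<Longrightarrow> V \<subseteq> U \<Longrightarrow> trans_index I V"
  unfolding trans_index_def by blast

lemma dt_Id: assumes "is_dci I" "trans_index I U" shows "dtrans I U = dtrans I (U - Id)"
proof
  fix f
  have t2: "trans_index I (U - Id)" using trans_index_sub assms(2) by blast
  show "dtrans I U f = dtrans I (U - Id) f"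
  proof (cases "f \<in> feats I")
    case False
    have U: "U \<subseteq> sim I" using assms(2) unfolding trans_index_def by blast
    have "\<forall>p\<in>U. f \<notin> Fs I (fst p)" using False U sim_sub[OF assms(1)] unfolding feats_def by fastforce
    then show ?thesis using dt_out by (metis Diff_subset subsetD)
  next
    case True
    then obtain i where i: "i \<in> {1..k I}" "f \<in> Fs I i" by (rule feats_E)
    show ?thesis
    proof (cases "\<exists>j. (i,j) \<in> U")
      case True
      then obtain j where j: "(i,j) \<in> U" by blast
      have un: "\<forall>l. (i,l) \<in> U \<longrightarrow> l = j" using j assms(2) unfolding trans_index_def by blast
      have "dtrans I U f = sigma I i j f" using dt_in[OF assms j i(2)] .
      moreover have "dtrans I (U - Id) f = sigma I i j f"
        by (rule dt_gen[OF assms(1) t2 i]) (use un j in blast)+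
      ultimately show ?thesis by simp
    next
      case False
      then show ?thesis using dt_notsrc[OF assms(1,2) i] dt_notsrc[OF assms(1) t2 i] by auto
    qed
  qed
qed



lemma ti_fun: "trans_index I U \<Longrightarrow> (s,t) \<in> U \<Longrightarrow> (s,t') \<in> U \<Longrightarrow> t = t'"
  unfolding trans_index_def by fast
lemma ti_inj: "trans_index I U \<Longrightarrow> (s,t) \<in> U \<Longrightarrow> (s',t) \<in> U \<Longrightarrow> s = s'"
  unfolding trans_index_def by fast
lemma ti_sim: "trans_index I U \<Longrightarrow> (s,t) \<in> U \<Longrightarrow> (s,t) \<in> sim I"
  unfolding trans_index_def by fast

lemma delta_k: "delta I C \<subseteq> {1..k I}" unfolding delta_def by blast

lemma delta_mu: assumes dci: "is_dci I" and m: "mu_index I U C D"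
  shows "delta I D = tgt U \<union> (delta I C - src U)"
proof -
  have ti: "trans_index I U" and ph: "phi I D = dtrans I U ` phi I C"
    and s: "src U \<subseteq> delta I C" using m unfolding mu_index_def by auto
  show ?thesis
  proof
    show "delta I D \<subseteq> tgt U \<union> (delta I C - src U)"
    proof
      fix j assume j: "j \<in> delta I D"
      then obtain g where g: "g \<in> Fs I j" "g \<in> phi I D" and jk: "j \<in> {1..k I}" unfolding delta_def by blast
      then obtain f where f: "f \<in> phi I C" "g = dtrans I U f" using ph by blast
      then obtain i where i: "i \<in> {1..k I}" "f \<in> Fs I i" using phi_feats feats_E by (metis subsetD)
      have iC: "i \<in> delta I C" unfolding delta_def using i f by blast
      show "j \<in> tgt U \<union> (delta I C - src U)"
      proof (cases "\<exists>j'. (i,j') \<in> U")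
        case True
        then obtain j' where j': "(i,j') \<in> U" by blast
        have "g = sigma I i j' f" using dt_in[OF dci ti j' i(2)] f by simp
        then have "g \<in> Fs I j'" using sig_map[OF dci ti_sim[OF ti j'] i(2)] by simp
        then have "j' = j" using F_disj[OF dci _ jk _ g(1)] sim_sub[OF dci ti_sim[OF ti j']] by blast
        then show ?thesis using j' unfolding tgt_def by force
      next
        case False
        then have "g = f" using dt_notsrc[OF dci ti i] f by simp
        then have "i = j" using F_disj[OF dci i(1) jk i(2)] g by simp
        then show ?thesis using iC False unfolding src_def by force
      qed
    qed
  next
    show "tgt U \<union> (delta I C - src U) \<subseteq> delta I D"
    proof
      fix j assume "j \<in> tgt U \<union> (delta I C - src U)"
      then consider (a) i where "(i,j) \<in> U" | (b) "j \<in> delta I C" "j \<notin> src U"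
        unfolding tgt_def by force
      then show "j \<in> delta I D"
      proof cases
        case a
        then have "i \<in> delta I C" using s unfolding src_def by force
        then obtain f where f: "f \<in> Fs I i" "f \<in> phi I C" unfolding delta_def by blast
        have "dtrans I U f = sigma I i j f" using dt_in[OF dci ti a f(1)] .
        moreover have "sigma I i j f \<in> Fs I j" using sig_map[OF dci ti_sim[OF ti a] f(1)] .
        moreover have "dtrans I U f \<in> phi I D" using ph f by blast
        moreover have "j \<in> {1..k I}" using sim_sub[OF dci ti_sim[OF ti a]] by blast
        ultimately show ?thesis unfolding delta_def by force
      next
        case b
        then obtain f where f: "f \<in> Fs I j" "f \<in> phi I C" and jk: "j \<in> {1..k I}" unfolding delta_def by blast
        have "\<forall>j'. (j,j') \<notin> U" using b unfolding src_def by force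
        then have "dtrans I U f = f" using dt_notsrc[OF dci ti jk f(1)] by simp
        then have "f \<in> phi I D" using ph f by force
        then show ?thesis using f jk unfolding delta_def by blast
      qed
    qed
  qed
qed



lemma O_iff: "(a,b) \<in> oplus U V \<longleftrightarrow> (\<exists>j. (a,j)\<in>U \<and> (j,b)\<in>V \<and> a\<noteq>b) \<or> ((a,b)\<in>U \<and> \<not>(\<exists>l. (b,l)\<in>V)) \<or> ((a,b)\<in>V \<and> \<not>(\<exists>i. (i,a)\<in>U))"
  unfolding oplus_def src_def tgt_def by force

lemma O_cases: assumes "(a,b) \<in> oplus U V"
  obtains (c1) j where "(a,j)\<in>U" "(j,b)\<in>V" "a\<noteq>b"
  | (c2) "(a,b)\<in>U" "\<And>l. (b,l)\<notin>V"
  | (c3) "(a,b)\<in>V" "\<And>i. (i,a)\<notin>U"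
  using assms unfolding O_iff by blast

lemma pure:
  fixes U V :: "(nat \<times> nat) set"
  assumes uf: "\<forall>s t t'. ((s,t)\<in>U) \<longrightarrow> ((s,t')\<in>U) \<longrightarrow> t=t'"
   and ui: "\<forall>s s' t. ((s,t)\<in>U) \<longrightarrow> ((s',t)\<in>U) \<longrightarrow> s=s'"
   and vf: "\<forall>s t t'. ((s,t)\<in>V) \<longrightarrow> ((s,t')\<in>V) \<longrightarrow> t=t'"
   and vi: "\<forall>s s' t. ((s,t)\<in>V) \<longrightarrow> ((s',t)\<in>V) \<longrightarrow> s=s'"
   and sU: "\<forall>s t. ((s,t)\<in>U) \<longrightarrow> s \<in> A"
   and tU: "\<forall>s t. ((s,t)\<in>U) \<longrightarrow> (t \<in> A) \<longrightarrow> (\<exists>t'. (t,t')\<in>U)"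
   and sV: "\<forall>s t. ((s,t)\<in>V) \<longrightarrow> (\<exists>i. (i,s)\<in>U) \<or> (s\<in>A \<and> \<not>(\<exists>t'. (s,t')\<in>U))"
   and tV: "\<forall>s t. ((s,t)\<in>V) \<longrightarrow> ((\<exists>i. (i,t)\<in>U) \<or> (t\<in>A \<and> \<not>(\<exists>t'. (t,t')\<in>U))) \<longrightarrow> (\<exists>t'. (t,t')\<in>V)"
  shows "\<And>a b b'. (a,b) \<in> oplus U V \<Longrightarrow> (a,b') \<in> oplus U V \<Longrightarrow> b = b'"
    and "\<And>a a' b. (a,b) \<in> oplus U V \<Longrightarrow> (a',b) \<in> oplus U V \<Longrightarrow> a = a'"
    and "\<And>a b. (a,b) \<in> oplus U V \<Longrightarrow> a \<in> A"
    and "\<And>a b. (a,b) \<in> oplus U V \<Longrightarrow> b \<in> A \<Longrightarrow> \<exists>c. (b,c) \<in> oplus U V"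
proof -
  fix a b b' assume h1: "(a,b) \<in> oplus U V" and h2: "(a,b') \<in> oplus U V"
  show "b = b'"
  using h1 proof (cases rule: O_cases)
    case (c1 j)
    then show ?thesis by (cases rule: O_cases[OF h2]) (use uf vf sV in blast)+
  next
    case c2
    then show ?thesis by (cases rule: O_cases[OF h2]) (use uf vf sV in blast)+
  next
    case c3
    then show ?thesis by (cases rule: O_cases[OF h2]) (use uf vf sV in blast)+
  qed
next
  fix a a' b assume h1: "(a,b) \<in> oplus U V" and h2: "(a',b) \<in> oplus U V"
  show "a = a'"
  using h1 proof (cases rule: O_cases)
    case (c1 j)
    then show ?thesis by (cases rule: O_cases[OF h2]) (use ui vi tV in blast)+
  next
    case c2
    then show ?thesis by (cases rule: O_cases[OF h2]) (use ui vi tV in blast)+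
  next
    case c3
    then show ?thesis by (cases rule: O_cases[OF h2]) (use ui vi tV in blast)+
  qed
next
  fix a b assume "(a,b) \<in> oplus U V"
  then show "a \<in> A" by (cases rule: O_cases) (use sU sV in blast)+
next
  fix a b assume h: "(a,b) \<in> oplus U V" and bA: "b \<in> A"
  show "\<exists>c. (b,c) \<in> oplus U V"
  using h proof (cases rule: O_cases)
    case (c1 j)
    show ?thesis
    proof (cases "\<exists>t. (b,t) \<in> U")
      case True
      then obtain t where t: "(b,t) \<in> U" by blast
      have "b \<noteq> a" using c1 by simp
      show ?thesis
      proof (cases "\<exists>l. (t,l) \<in> V")
        case True
        then obtain l where l: "(t,l) \<in> V" by blast
        have "b \<noteq> l"
        proof
          assume "b = l"
          then have "t = j" using vi l c1 by blast
          then show False using ui t c1 \<open>b \<noteq> a\<close> by blast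
        qed
        then show ?thesis using t l unfolding O_iff by blast
      next
        case False
        then show ?thesis using t unfolding O_iff by blast
      qed
    next
      case False
      then have "\<exists>l. (b,l) \<in> V" using tV[rule_format, OF c1(2)] bA by blast
      then obtain l where l: "(b,l) \<in> V" by blast
      have "\<And>i. (i,b) \<notin> U" using False tU bA by blast
      then show ?thesis using l unfolding O_iff by blast
    qed
  next
    case c2
    then obtain t where t: "(b,t) \<in> U" using tU bA by blast
    show ?thesis
    proof (cases "\<exists>l. (t,l) \<in> V")
      case True
      then obtain l where l: "(t,l) \<in> V" by blast
      have "b \<noteq> l"
      proof
        assume "b = l"
        then have "\<exists>t'. (b,t') \<in> V" using tV[rule_format, of t b] l c2 by blast
        then show False using c2 by blast
      qed
      then show ?thesis using t l unfolding O_iff by blast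
    next
      case False
      then show ?thesis using t unfolding O_iff by blast
    qed
  next
    case c3
    show ?thesis
    proof (cases "\<exists>t. (b,t) \<in> U")
      case True
      then obtain t where t: "(b,t) \<in> U" by blast
      show ?thesis
      proof (cases "\<exists>l. (t,l) \<in> V")
        case True
        then obtain l where l: "(t,l) \<in> V" by blast
        have "b \<noteq> l"
        proof
          assume "b = l"
          then have "t = a" using vi l c3 by blast
          then show False using c3 t by blast
        qed
        then show ?thesis using t l unfolding O_iff by blast
      next
        case False
        then show ?thesis using t unfolding O_iff by blast
      qed
    next
      case False
      then have "\<exists>l. (b,l) \<in> V" using tV[rule_format, OF c3(1)] bA by blast
      then obtain l where l: "(b,l) \<in> V" by blast
      have "\<And>i. (i,b) \<notin> U" using False tU bA by blast
      then show ?thesis using l unfolding O_iff by blast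
    qed
  qed
qed



lemma oplus_mu:
  assumes dci: "is_dci I" and mU: "mu_index I U C D" and mV: "mu_index I V D E"
  shows "mu_index I (oplus U V) C E"
proof -
  have tiU: "trans_index I U" and phD: "phi I D = dtrans I U ` phi I C"
    and sUC: "src U \<subseteq> delta I C" and tUC: "tgt U \<inter> (delta I C - src U) = {}"
    using mU unfolding mu_index_def by auto
  have tiV: "trans_index I V" and phE: "phi I E = dtrans I V ` phi I D"
    and sVD: "src V \<subseteq> delta I D" and tVD: "tgt V \<inter> (delta I D - src V) = {}"
    using mV unfolding mu_index_def by auto
  have dD: "delta I D = tgt U \<union> (delta I C - src U)" using delta_mu[OF dci mU] .
  let ?O = "oplus U V"
  have uf: "\<And>s t t'. (s,t)\<in>U \<Longrightarrow> (s,t')\<in>U \<Longrightarrow> t=t'" using ti_fun[OF tiU] by blast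
  have ui: "\<And>s s' t. (s,t)\<in>U \<Longrightarrow> (s',t)\<in>U \<Longrightarrow> s=s'" using ti_inj[OF tiU] by blast
  have vf: "\<And>s t t'. (s,t)\<in>V \<Longrightarrow> (s,t')\<in>V \<Longrightarrow> t=t'" using ti_fun[OF tiV] by blast
  have vi: "\<And>s s' t. (s,t)\<in>V \<Longrightarrow> (s',t)\<in>V \<Longrightarrow> s=s'" using ti_inj[OF tiV] by blast
  have sU: "\<And>s t. (s,t)\<in>U \<Longrightarrow> s \<in> delta I C" using sUC unfolding src_def by force
  have tU: "\<And>s t. (s,t)\<in>U \<Longrightarrow> t \<in> delta I C \<Longrightarrow> \<exists>t'. (t,t')\<in>U"
    using tUC unfolding src_def tgt_def by force
  have sV: "\<And>s t. (s,t)\<in>V \<Longrightarrow> (\<exists>i. (i,s)\<in>U) \<or> (s\<in>delta I C \<and> \<not>(\<exists>t'. (s,t')\<in>U))"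
    using sVD unfolding dD src_def tgt_def by force
  have tV: "\<And>s t. (s,t)\<in>V \<Longrightarrow> (\<exists>i. (i,t)\<in>U) \<or> (t\<in>delta I C \<and> \<not>(\<exists>t'. (t,t')\<in>U)) \<Longrightarrow> \<exists>t'. (t,t')\<in>V"
    using tVD unfolding dD src_def tgt_def by force
  have uf': "\<forall>s t t'. ((s,t)\<in>U) \<longrightarrow> ((s,t')\<in>U) \<longrightarrow> t=t'" using uf by blast
  have ui': "\<forall>s s' t. ((s,t)\<in>U) \<longrightarrow> ((s',t)\<in>U) \<longrightarrow> s=s'" using ui by blast
  have vf': "\<forall>s t t'. ((s,t)\<in>V) \<longrightarrow> ((s,t')\<in>V) \<longrightarrow> t=t'" using vf by blast
  have vi': "\<forall>s s' t. ((s,t)\<in>V) \<longrightarrow> ((s',t)\<in>V) \<longrightarrow> s=s'" using vi by blast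
  have sU': "\<forall>s t. ((s,t)\<in>U) \<longrightarrow> s \<in> delta I C" using sU by blast
  have tU': "\<forall>s t. ((s,t)\<in>U) \<longrightarrow> (t \<in> delta I C) \<longrightarrow> (\<exists>t'. (t,t')\<in>U)" using tU by blast
  have sV': "\<forall>s t. ((s,t)\<in>V) \<longrightarrow> (\<exists>i. (i,s)\<in>U) \<or> (s\<in>delta I C \<and> \<not>(\<exists>t'. (s,t')\<in>U))" using sV by blast
  have tV': "\<forall>s t. ((s,t)\<in>V) \<longrightarrow> ((\<exists>i. (i,t)\<in>U) \<or> (t\<in>delta I C \<and> \<not>(\<exists>t'. (t,t')\<in>U))) \<longrightarrow> (\<exists>t'. (t,t')\<in>V)" using tV by blast
  note pu = pure[of U V "delta I C", OF uf' ui' vf' vi' sU' tU' sV' tV']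
  have simU: "\<And>s t. (s,t)\<in>U \<Longrightarrow> (s,t) \<in> sim I" using ti_sim[OF tiU] by blast
  have simV: "\<And>s t. (s,t)\<in>V \<Longrightarrow> (s,t) \<in> sim I" using ti_sim[OF tiV] by blast
  have Osim: "?O \<subseteq> sim I"
  proof
    fix p assume "p \<in> ?O"
    then obtain a b where p: "p = (a,b)" "(a,b) \<in> ?O" by (cases p) auto
    from p(2) have "(a,b) \<in> sim I"
      by (cases rule: O_cases) (use simU simV sim_trans[OF dci] in blast)+
    then show "p \<in> sim I" using p by simp
  qed
  have tiO: "trans_index I ?O" unfolding trans_index_def using Osim pu(1,2) by blast
  have sO: "src ?O \<subseteq> delta I C" using pu(3) unfolding src_def by force
  have tO: "tgt ?O \<inter> (delta I C - src ?O) = {}" using pu(4) unfolding src_def tgt_def by force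
  have key: "dtrans I ?O f = dtrans I V (dtrans I U f)" if fC: "f \<in> phi I C" for f
  proof -
    obtain i where i: "i \<in> {1..k I}" "f \<in> Fs I i" using fC phi_feats feats_E by (metis subsetD)
    have iC: "i \<in> delta I C" unfolding delta_def using i fC by blast
    show ?thesis
    proof (cases "\<exists>j. (i,j) \<in> U")
      case True
      then obtain j where j: "(i,j) \<in> U" by blast
      have jk: "j \<in> {1..k I}" using sim_sub[OF dci simU[OF j]] by blast
      have dU: "dtrans I U f = sigma I i j f" using dt_in[OF dci tiU j i(2)] .
      have g: "sigma I i j f \<in> Fs I j" using sig_map[OF dci simU[OF j] i(2)] .
      show ?thesis
      proof (cases "\<exists>l. (j,l) \<in> V")
        case True
        then obtain l where l: "(j,l) \<in> V" by blast
        have "dtrans I V (dtrans I U f) = sigma I i l f"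
          using dU dt_in[OF dci tiV l g] sig_comp[OF dci simU[OF j] simV[OF l] i(2)] by simp
        moreover have "dtrans I ?O f = sigma I i l f"
        proof (rule dt_gen[OF dci tiO i])
          show "\<forall>l'. (i,l') \<in> ?O \<longrightarrow> l' = l"
          proof (intro allI impI)
            fix l' assume "(i,l') \<in> ?O"
            then show "l' = l" by (cases rule: O_cases) (use j l uf vf sV in blast)+
          qed
          show "l \<noteq> i \<longrightarrow> (i,l) \<in> ?O" using j l unfolding O_iff by blast
        qed
        ultimately show ?thesis by simp
      next
        case False
        have "dtrans I V (sigma I i j f) = sigma I i j f"
          using dt_notsrc[OF dci tiV jk g] False by blast
        moreover have "dtrans I ?O f = sigma I i j f"
        proof (rule dt_gen[OF dci tiO i])
          show "\<forall>l'. (i,l') \<in> ?O \<longrightarrow> l' = j"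
          proof (intro allI impI)
            fix l' assume "(i,l') \<in> ?O"
            then show "l' = j" by (cases rule: O_cases) (use j False uf vf sV in blast)+
          qed
          show "j \<noteq> i \<longrightarrow> (i,j) \<in> ?O" using j False unfolding O_iff by blast
        qed
        ultimately show ?thesis using dU by simp
      qed
    next
      case False
      have dU: "dtrans I U f = f" using dt_notsrc[OF dci tiU i] False by blast
      have nt: "\<And>x. (x,i) \<notin> U" using tUC iC False unfolding src_def tgt_def by force
      show ?thesis
      proof (cases "\<exists>l. (i,l) \<in> V")
        case True
        then obtain l where l: "(i,l) \<in> V" by blast
        have "dtrans I V f = sigma I i l f" using dt_in[OF dci tiV l i(2)] .
        moreover have "dtrans I ?O f = sigma I i l f"
        proof (rule dt_gen[OF dci tiO i])
          show "\<forall>l'. (i,l') \<in> ?O \<longrightarrow> l' = l"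
          proof (intro allI impI)
            fix l' assume "(i,l') \<in> ?O"
            then show "l' = l" by (cases rule: O_cases) (use False l vf in blast)+
          qed
          show "l \<noteq> i \<longrightarrow> (i,l) \<in> ?O" using l nt unfolding O_iff by blast
        qed
        ultimately show ?thesis using dU by simp
      next
        case False2: False
        have "dtrans I V f = f" using dt_notsrc[OF dci tiV i] False2 by blast
        moreover have "dtrans I ?O f = f"
        proof (rule dt_notsrc[OF dci tiO i], intro allI notI)
          fix l' assume "(i,l') \<in> ?O"
          then show False by (cases rule: O_cases) (use False False2 in blast)+
        qed
        ultimately show ?thesis using dU by simp
      qed
    qed
  qed
  have e1: "phi I E = (\<lambda>f. dtrans I V (dtrans I U f)) ` phi I C"
    unfolding phE phD image_image by (rule refl)
  have e2: "(\<lambda>f. dtrans I V (dtrans I U f)) ` phi I C = dtrans I ?O ` phi I C"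
    by (rule image_cong[OF refl], rule key[symmetric], assumption)
  have "phi I E = dtrans I ?O ` phi I C" using e1 e2 by (rule trans)
  then show ?thesis unfolding mu_index_def using tiO sO tO by blast
qed



lemma sub_dir:
  assumes dci: "is_dci I" and mW: "mu_index I W C E" and mU: "mu_index I U C D"
  shows "\<exists>V. mu_index I V D E \<and> dtrans I W = dtrans I (oplus U V)"
proof -
  have tiU: "trans_index I U" and phD: "phi I D = dtrans I U ` phi I C"
    and sUC: "src U \<subseteq> delta I C" and tUC: "tgt U \<inter> (delta I C - src U) = {}"
    using mU unfolding mu_index_def by auto
  have tiW: "trans_index I W" and phE: "phi I E = dtrans I W ` phi I C"
    and sWC: "src W \<subseteq> delta I C" and tWC: "tgt W \<inter> (delta I C - src W) = {}"
    using mW unfolding mu_index_def by auto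
  have dD: "delta I D = tgt U \<union> (delta I C - src U)" using delta_mu[OF dci mU] .
  have uf: "\<And>s t t'. (s,t)\<in>U \<Longrightarrow> (s,t')\<in>U \<Longrightarrow> t=t'" using ti_fun[OF tiU] by blast
  have ui: "\<And>s s' t. (s,t)\<in>U \<Longrightarrow> (s',t)\<in>U \<Longrightarrow> s=s'" using ti_inj[OF tiU] by blast
  have wf: "\<And>s t t'. (s,t)\<in>W \<Longrightarrow> (s,t')\<in>W \<Longrightarrow> t=t'" using ti_fun[OF tiW] by blast
  have wi: "\<And>s s' t. (s,t)\<in>W \<Longrightarrow> (s',t)\<in>W \<Longrightarrow> s=s'" using ti_inj[OF tiW] by blast
  have sU: "\<And>s t. (s,t)\<in>U \<Longrightarrow> s \<in> delta I C" using sUC unfolding src_def by force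
  have tU: "\<And>s t. (s,t)\<in>U \<Longrightarrow> t \<in> delta I C \<Longrightarrow> \<exists>t'. (t,t')\<in>U"
    using tUC unfolding src_def tgt_def by force
  have sW: "\<And>s t. (s,t)\<in>W \<Longrightarrow> s \<in> delta I C" using sWC unfolding src_def by force
  have tW: "\<And>s t. (s,t)\<in>W \<Longrightarrow> t \<in> delta I C \<Longrightarrow> \<exists>t'. (t,t')\<in>W"
    using tWC unfolding src_def tgt_def by force
  have simU: "\<And>s t. (s,t)\<in>U \<Longrightarrow> (s,t) \<in> sim I" using ti_sim[OF tiU] by blast
  have simW: "\<And>s t. (s,t)\<in>W \<Longrightarrow> (s,t) \<in> sim I" using ti_sim[OF tiW] by blast
  define Uh where "Uh i j \<longleftrightarrow> (i,j) \<in> U \<or> (j = i \<and> (\<forall>x. (i,x) \<notin> U))" for i j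
  define Wh where "Wh i j \<longleftrightarrow> (i,j) \<in> W \<or> (j = i \<and> (\<forall>x. (i,x) \<notin> W))" for i j
  have Uh_ex: "\<And>i. \<exists>j. Uh i j" unfolding Uh_def by blast
  have Wh_ex: "\<And>i. \<exists>j. Wh i j" unfolding Wh_def by blast
  have Uh_fun: "\<And>i j j'. Uh i j \<Longrightarrow> Uh i j' \<Longrightarrow> j = j'" unfolding Uh_def using uf by blast
  have Wh_fun: "\<And>i j j'. Wh i j \<Longrightarrow> Wh i j' \<Longrightarrow> j = j'" unfolding Wh_def using wf by blast
  have Uh_inj: "\<And>i i' j. i \<in> delta I C \<Longrightarrow> i' \<in> delta I C \<Longrightarrow> Uh i j \<Longrightarrow> Uh i' j \<Longrightarrow> i = i'"
    unfolding Uh_def using ui tU by blast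
  have Wh_inj: "\<And>i i' j. i \<in> delta I C \<Longrightarrow> i' \<in> delta I C \<Longrightarrow> Wh i j \<Longrightarrow> Wh i' j \<Longrightarrow> i = i'"
    unfolding Wh_def using wi tW by blast
  have dCk: "\<And>i. i \<in> delta I C \<Longrightarrow> i \<in> {1..k I}" using delta_k by blast
  have Uh_sim: "\<And>i j. i \<in> delta I C \<Longrightarrow> Uh i j \<Longrightarrow> (i,j) \<in> sim I"
    unfolding Uh_def using simU sim_refl[OF dci] dCk by blast
  have Wh_sim: "\<And>i j. i \<in> delta I C \<Longrightarrow> Wh i j \<Longrightarrow> (i,j) \<in> sim I"
    unfolding Wh_def using simW sim_refl[OF dci] dCk by blast
  define V where "V = {(j,l). \<exists>i\<in>delta I C. Uh i j \<and> Wh i l \<and> j \<noteq> l}"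
  have Vsim: "V \<subseteq> sim I"
  proof
    fix p assume "p \<in> V"
    then obtain j l i where p: "p = (j,l)" "i \<in> delta I C" "Uh i j" "Wh i l" unfolding V_def by blast
    have "(j,i) \<in> sim I" using sim_sym[OF dci Uh_sim[OF p(2,3)]] .
    then show "p \<in> sim I" using sim_trans[OF dci _ Wh_sim[OF p(2,4)]] p(1) by blast
  qed
  have tiV: "trans_index I V" unfolding trans_index_def
  proof (intro conjI Vsim ballI, clarify)
    fix j l j' l'
    assume "(j,l) \<in> V" "(j',l') \<in> V"
    then obtain i i' where "i \<in> delta I C" "Uh i j" "Wh i l" "i' \<in> delta I C" "Uh i' j'" "Wh i' l'"
      unfolding V_def by blast
    then show "(j = j' \<longrightarrow> l = l') \<and> (l = l' \<longrightarrow> j = j')"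
      using Uh_inj Wh_inj Uh_fun Wh_fun by metis
  qed
  have sVD: "src V \<subseteq> delta I D"
  proof
    fix j assume "j \<in> src V"
    then obtain l i where "i \<in> delta I C" "Uh i j" unfolding src_def V_def by force
    then show "j \<in> delta I D" unfolding dD Uh_def src_def tgt_def by force
  qed
  have dD_Uh: "\<And>j. j \<in> delta I D \<Longrightarrow> \<exists>i\<in>delta I C. Uh i j"
    unfolding dD Uh_def src_def tgt_def using sU by force
  have tVD: "tgt V \<inter> (delta I D - src V) = {}"
  proof (rule ccontr)
    assume "tgt V \<inter> (delta I D - src V) \<noteq> {}"
    then obtain j where j: "j \<in> tgt V" "j \<in> delta I D" "j \<notin> src V" by blast
    obtain i where i: "i \<in> delta I C" "Uh i j" using dD_Uh[OF j(2)] by blast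
    have Wij: "Wh i j"
    proof (rule ccontr)
      assume "\<not> Wh i j"
      obtain l where "Wh i l" using Wh_ex by blast
      then have "(j,l) \<in> V" unfolding V_def using i \<open>\<not> Wh i j\<close> by blast
      then show False using j(3) unfolding src_def by force
    qed
    obtain j0 i0 where "i0 \<in> delta I C" "Uh i0 j0" "Wh i0 j" "j0 \<noteq> j"
      using j(1) unfolding tgt_def V_def by force
    then show False using Wh_inj[OF _ i(1) _ Wij] Uh_fun i(2) by blast
  qed
  have keyV: "dtrans I V (dtrans I U f) = dtrans I W f" if fC: "f \<in> phi I C" for f
  proof -
    obtain i where i: "i \<in> {1..k I}" "f \<in> Fs I i" using fC phi_feats feats_E by (metis subsetD)
    have iC: "i \<in> delta I C" unfolding delta_def using i fC by blast
    obtain j where j: "Uh i j" using Uh_ex by blast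
    obtain l where l: "Wh i l" using Wh_ex by blast
    have ij: "(i,j) \<in> sim I" using Uh_sim[OF iC j] .
    have il: "(i,l) \<in> sim I" using Wh_sim[OF iC l] .
    have jl: "(j,l) \<in> sim I" using sim_trans[OF dci sim_sym[OF dci ij] il] .
    have jk: "j \<in> {1..k I}" using sim_sub[OF dci ij] by blast
    have dU: "dtrans I U f = sigma I i j f"
      by (rule dt_gen[OF dci tiU i]) (use j uf in \<open>auto simp: Uh_def\<close>)
    have g: "sigma I i j f \<in> Fs I j" using sig_map[OF dci ij i(2)] .
    have dV: "dtrans I V (sigma I i j f) = sigma I j l (sigma I i j f)"
    proof (rule dt_gen[OF dci tiV jk g])
      show "\<forall>l'. (j,l') \<in> V \<longrightarrow> l' = l"
      proof (intro allI impI)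
        fix l' assume "(j,l') \<in> V"
        then obtain i' where "i' \<in> delta I C" "Uh i' j" "Wh i' l'" unfolding V_def by blast
        then show "l' = l" using Uh_inj[OF _ iC _ j] Wh_fun l by blast
      qed
      show "l \<noteq> j \<longrightarrow> (j,l) \<in> V" unfolding V_def using iC j l by blast
    qed
    have dW: "dtrans I W f = sigma I i l f"
      by (rule dt_gen[OF dci tiW i]) (use l wf in \<open>auto simp: Wh_def\<close>)
    show ?thesis using dU dV dW sig_comp[OF dci ij jl i(2)] by simp
  qed
  have e1: "phi I E = (\<lambda>f. dtrans I V (dtrans I U f)) ` phi I C"
    unfolding phE by (rule image_cong[OF refl], rule keyV[symmetric], assumption)
  have phEV: "phi I E = dtrans I V ` phi I D"
    unfolding e1 phD image_image by (rule refl)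
  have mV: "mu_index I V D E" unfolding mu_index_def using tiV phEV sVD tVD by blast
  have mO: "mu_index I (oplus U V) C E" using oplus_mu[OF dci mU mV] .
  have tiO: "trans_index I (oplus U V)" using mO unfolding mu_index_def by blast
  have eqId: "oplus U V - Id = W - Id"
  proof (intro set_eqI iffI)
    fix p assume "p \<in> oplus U V - Id"
    then obtain a b where p: "p = (a,b)" "(a,b) \<in> oplus U V" "a \<noteq> b" by (cases p) auto
    from p(2) have "(a,b) \<in> W"
    proof (cases rule: O_cases)
      case (c1 j)
      then obtain i where i: "i \<in> delta I C" "Uh i j" "Wh i b" unfolding V_def by blast
      have "Uh a j" using c1 unfolding Uh_def by blast
      then have "i = a" using Uh_inj[OF i(1) sU[OF c1(1)] i(2)] by blast
      then show ?thesis using i(3) p(3) unfolding Wh_def by blast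
    next
      case c2
      have aC: "a \<in> delta I C" using sU[OF c2(1)] .
      obtain l where l: "Wh a l" using Wh_ex by blast
      have "Uh a b" using c2 unfolding Uh_def by blast
      then have "l = b" using c2(2) l aC unfolding V_def by blast
      then show ?thesis using l p(3) unfolding Wh_def by blast
    next
      case c3
      then obtain i where i: "i \<in> delta I C" "Uh i a" "Wh i b" unfolding V_def by blast
      have "i = a" using i(2) c3(2) unfolding Uh_def by blast
      then show ?thesis using i(3) p(3) unfolding Wh_def by blast
    qed
    then show "p \<in> W - Id" using p by simp
  next
    fix p assume "p \<in> W - Id"
    then obtain a b where p: "p = (a,b)" "(a,b) \<in> W" "a \<noteq> b" by (cases p) auto
    have aC: "a \<in> delta I C" using sW[OF p(2)] .
    have Wab: "Wh a b" using p(2) unfolding Wh_def by blast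
    have "(a,b) \<in> oplus U V"
    proof (cases "\<exists>j. (a,j) \<in> U")
      case True
      then obtain j where j: "(a,j) \<in> U" by blast
      have Uaj: "Uh a j" using j unfolding Uh_def by blast
      show ?thesis
      proof (cases "j = b")
        case False
        then have "(j,b) \<in> V" unfolding V_def using aC Uaj Wab by blast
        then show ?thesis unfolding O_iff using j p(3) by blast
      next
        case True
        have "\<And>l. (b,l) \<notin> V"
        proof
          fix l assume "(b,l) \<in> V"
          then obtain i' where i': "i' \<in> delta I C" "Uh i' b" "Wh i' l" "b \<noteq> l" unfolding V_def by blast
          have "i' = a" using Uh_inj[OF i'(1) aC i'(2)] Uaj True by blast
          then show False using i' Wab Wh_fun by blast
        qed
        then show ?thesis unfolding O_iff using j True by blast
      qed
    next
      case False
      have Uaa: "Uh a a" using False unfolding Uh_def by blast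
      have "(a,b) \<in> V" unfolding V_def using aC Uaa Wab p(3) by blast
      moreover have "\<And>i. (i,a) \<notin> U" using False tU aC by blast
      ultimately show ?thesis unfolding O_iff by blast
    qed
    then show "p \<in> oplus U V - Id" using p by simp
  qed
  have "dtrans I W = dtrans I (oplus U V)"
    using dt_Id[OF dci tiW] dt_Id[OF dci tiO] eqId by simp
  then show ?thesis using mV by blast
qed


theorem proposition3:
  fixes I :: "('d, 'c, 'r, 'f) dci"
    and C D E :: "('c, 'r) concept"
  assumes "is_dci I"
    and "wf_concept (NC I) (IR I) C"
    and "wf_concept (NC I) (IR I) D"
    and "wf_concept (NC I) (IR I) E"
    and "mu I C D \<noteq> {}"
    and "mu I D E \<noteq> {}"
  shows "mu I C E = {dtrans I (oplus U V) | U V. mu_index I U C D \<and> mu_index I V D E}"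
proof (intro set_eqI iffI)
  fix x assume "x \<in> mu I C E"
  then obtain W where W: "x = dtrans I W" "mu_index I W C E" unfolding mu_def by blast
  obtain U where U: "mu_index I U C D" using assms(5) unfolding mu_def by blast
  obtain V where V: "mu_index I V D E" "dtrans I W = dtrans I (oplus U V)"
    using sub_dir[OF assms(1) W(2) U] by blast
  show "x \<in> {dtrans I (oplus U V) | U V. mu_index I U C D \<and> mu_index I V D E}"
    using U V W(1) by blast
next
  fix x assume "x \<in> {dtrans I (oplus U V) | U V. mu_index I U C D \<and> mu_index I V D E}"
  then obtain U V where x: "x = dtrans I (oplus U V)" "mu_index I U C D" "mu_index I V D E" by blast
  show "x \<in> mu I C E" using oplus_mu[OF assms(1) x(2,3)] x(1) unfolding mu_def by blast
qed

end
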